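(* Let $n\ge 30$ be an integer and let $k$ be real with $\frac{n-10}{2}-\sqrt n<k<\frac{n-10}{2}+\sqrt n$. Set $p=1+\frac8k$ and $q=\frac{n-8}{2}$. Then $pJ_2-q_2>0$, where $$J_2=(k+4)(k+6-n)(k+6)(k+8-n)+k(k+2-n)(k+6)(k+8-n)+(k+2)(k+4-n)(k+6)(k+8-n)+k(k+2-n)(k+4)(k+6-n)+(k+2)(k+4-n)(k+4)(k+6-n)+k(k+2-n)(k+2)(k+4-n),$$ $$q_2=\big((q+2)(q+4-n)+q(q+2-n)\big)^2+2q(q+2-n)(q+2)(q+4-n).$$
   Context: Here $k=\frac{8}{p-1}$ corresponds to the homogeneity degree of solutions of $\Delta^4u=|u|^{p-1}u$; the claim is a purely algebraic inequality in the real variable $k$ and the integer $n$. *)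

theory Defs
  imports Complex_Main
begin

end

theory Submission
  imports Defs
begin

lemma key_id:
  fixes a x :: real
  defines "N \<equiv> a^2" and "k \<equiv> x - a + (a^2 - 10)/2" and "q \<equiv> (a^2 - 8)/2"
  shows "32*a^5*((k+8)*((k+4)*(k+6-N)*(k+6)*(k+8-N) + k*(k+2-N)*(k+6)*(k+8-N)
       + (k+2)*(k+4-N)*(k+6)*(k+8-N) + k*(k+2-N)*(k+4)*(k+6-N)
       + (k+2)*(k+4-N)*(k+4)*(k+6-N) + k*(k+2-N)*(k+2)*(k+4-N))
    - k*(((q+2)*(q+4-N) + q*(q+2-N))^2 + 2*q*(q+2-N)*(q+2)*(q+4-N)))
   = (let B = a - 27/5; Y = 2*a - x in (223989578459/390625)*Y^5 + (1902560694151/390625)*x*Y^4 + (5963950861568/390625)*x^2*Y^3 + (7442261886428/390625)*x^3*Y^2 + (3055049779261/390625)*x^4*Y + (242541406709/390625)*x^5 + (80616857336/78125)*B*Y^5 + (680003480994/78125)*B*x*Y^4 + (2003191481212/78125)*B*x^2*Y^3 + (2371013899472/78125)*B*x^3*Y^2 + (988538903004/78125)*B*x^4*Y + (85102781086/78125)*B*x^5 + (24273270201/31250)*B^2*Y^5 + (203620487669/31250)*B^2*x*Y^4 + (285931272141/15625)*B^2*x^2*Y^3 + (325285562781/15625)*B^2*x^3*Y^2 + (273657613949/31250)*B^2*x^4*Y + (25049655201/31250)*B^2*x^5 + (1003982688/3125)*B^3*Y^5 + (8424003592/3125)*B^3*x*Y^4 + (22791529036/3125)*B^3*x^2*Y^3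 + (25143216236/3125)*B^3*x^3*Y^2 + (10616458292/3125)*B^3*x^4*Y + (1019710188/3125)*B^3*x^5 + (20121697/250)*B^4*Y^5 + (169843753/250)*B^4*x*Y^4 + (223020257/125)*B^4*x^2*Y^3 + (239999477/125)*B^4*x^3*Y^2 + (202627693/250)*B^4*x^4*Y + (20243197/250)*B^4*x^5 + (1573272/125)*B^5*Y^5 + (13423758/125)*B^5*x*Y^4 + (34414644/125)*B^5*x^2*Y^3 + (36268224/125)*B^5*x^3*Y^2 + (15255588/125)*B^5*x^4*Y + (1575522/125)*B^5*x^5 + (60261/50)*B^6*Y^5 + (521769/50)*B^6*x*Y^4 + (655881/25)*B^6*x^2*Y^3 + (678561/25)*B^6*x^3*Y^2 + (567129/50)*B^6*x^4*Y + (60261/50)*B^6*x^5 + (324/5)*B^7*Y^5 + (2856/5)*B^7*x*Y^4 + (7068/5)*B^7*x^2*Y^3 + (7188/5)*B^7*x^3*Y^2 + (2976/5)*B^7*x^4*Y + (324/5)*B^7*x^5 + (3/2)*B^8*Y^5 + (27/2)*B^8*x*Y^4 + 33*B^8*x^2*Y^3 + 33*B^8*x^3*Y^2 + (27/2)*B^8*x^4*Y + (3/2)*B^8*x^5)"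
  unfolding N_def k_def q_def Let_def apply (simp add: field_simps) by algebra

lemma key_pos:
  fixes B x Y :: real
  assumes "B \<ge> 0" "x > 0" "Y > 0"
  shows "0 < (223989578459/390625)*Y^5 + (1902560694151/390625)*x*Y^4 + (5963950861568/390625)*x^2*Y^3 + (7442261886428/390625)*x^3*Y^2 + (3055049779261/390625)*x^4*Y + (242541406709/390625)*x^5 + (80616857336/78125)*B*Y^5 + (680003480994/78125)*B*x*Y^4 + (2003191481212/78125)*B*x^2*Y^3 + (2371013899472/78125)*B*x^3*Y^2 + (988538903004/78125)*B*x^4*Y + (85102781086/78125)*B*x^5 + (24273270201/31250)*B^2*Y^5 + (203620487669/31250)*B^2*x*Y^4 + (285931272141/15625)*B^2*x^2*Y^3 + (325285562781/15625)*B^2*x^3*Y^2 + (273657613949/31250)*B^2*x^4*Y + (25049655201/31250)*B^2*x^5 + (1003982688/3125)*B^3*Y^5 + (8424003592/3125)*B^3*x*Y^4 + (22791529036/3125)*B^3*x^2*Y^3 + (25143216236/3125)*B^3*x^3*Y^2 + (10616458292/3125)*B^3*x^4*Y + (1019710188/3125)*B^3*x^5 + (20121697/250)*B^4*Y^5 + (169843753/250)*B^4*x*Y^4 + (223020257/125)*B^4*x^2*Y^3 + (239999477/125)*B^4*x^3*Y^2 + (202627693/250)*B^4*x^4*Y + (20243197/250)*B^4*x^5 + (1573272/125)*B^5*Y^5 + (13423758/125)*B^5*x*Y^4 + (34414644/125)*B^5*x^2*Y^3 + (36268224/125)*B^5*x^3*Y^2 + (15255588/125)*B^5*x^4*Y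 + (1575522/125)*B^5*x^5 + (60261/50)*B^6*Y^5 + (521769/50)*B^6*x*Y^4 + (655881/25)*B^6*x^2*Y^3 + (678561/25)*B^6*x^3*Y^2 + (567129/50)*B^6*x^4*Y + (60261/50)*B^6*x^5 + (324/5)*B^7*Y^5 + (2856/5)*B^7*x*Y^4 + (7068/5)*B^7*x^2*Y^3 + (7188/5)*B^7*x^3*Y^2 + (2976/5)*B^7*x^4*Y + (324/5)*B^7*x^5 + (3/2)*B^8*Y^5 + (27/2)*B^8*x*Y^4 + 33*B^8*x^2*Y^3 + 33*B^8*x^3*Y^2 + (27/2)*B^8*x^4*Y + (3/2)*B^8*x^5"
  using assms by (intro add_pos_nonneg add_nonneg_nonneg mult_nonneg_nonneg mult_pos_pos zero_le_power zero_less_power; simp)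

lemma key:
  fixes a x k N :: real
  assumes "N = a^2" "k = x - a + (N - 10)/2" "a \<ge> 27/5" "x > 0" "2*a - x > 0"
  shows "0 < (k+8)*((k+4)*(k+6-N)*(k+6)*(k+8-N) + k*(k+2-N)*(k+6)*(k+8-N)
       + (k+2)*(k+4-N)*(k+6)*(k+8-N) + k*(k+2-N)*(k+4)*(k+6-N)
       + (k+2)*(k+4-N)*(k+4)*(k+6-N) + k*(k+2-N)*(k+2)*(k+4-N))
    - k*((((N - 8)/2+2)*((N - 8)/2+4-N) + ((N - 8)/2)*((N - 8)/2+2-N))^2
         + 2*((N - 8)/2)*((N - 8)/2+2-N)*((N - 8)/2+2)*((N - 8)/2+4-N))"
    (is "0 < ?E")
proof -
  have k: "k = x - a + (a^2 - 10)/2" using assms(1,2) by simp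
  have "32*a^5*?E = (let B = a - 27/5; Y = 2*a - x in (223989578459/390625)*Y^5 + (1902560694151/390625)*x*Y^4 + (5963950861568/390625)*x^2*Y^3 + (7442261886428/390625)*x^3*Y^2 + (3055049779261/390625)*x^4*Y + (242541406709/390625)*x^5 + (80616857336/78125)*B*Y^5 + (680003480994/78125)*B*x*Y^4 + (2003191481212/78125)*B*x^2*Y^3 + (2371013899472/78125)*B*x^3*Y^2 + (988538903004/78125)*B*x^4*Y + (85102781086/78125)*B*x^5 + (24273270201/31250)*B^2*Y^5 + (203620487669/31250)*B^2*x*Y^4 + (285931272141/15625)*B^2*x^2*Y^3 + (325285562781/15625)*B^2*x^3*Y^2 + (273657613949/31250)*B^2*x^4*Y + (25049655201/31250)*B^2*x^5 + (1003982688/3125)*B^3*Y^5 + (8424003592/3125)*B^3*x*Y^4 + (22791529036/3125)*B^3*x^2*Y^3 + (25143216236/3125)*B^3*x^3*Y^2 + (10616458292/3125)*B^3*x^4*Y + (1019710188/3125)*B^3*x^5 + (20121697/250)*B^4*Y^5 + (169843753/250)*B^4*x*Y^4 + (223020257/125)*B^4*x^2*Y^3 + (239999477/125)*B^4*x^3*Y^2 + (202627693/250)*B^4*x^4*Y + (20243197/250)*B^4*x^5 + (1573272/125)*B^5*Y^5 + (13423758/125)*B^5*x*Y^4 + (34414644/125)*B^5*x^2*Y^3 + (36268224/125)*B^5*x^3*Y^2 + (15255588/125)*B^5*x^4*Y + (1575522/125)*B^5*x^5 + (60261/50)*B^6*Y^5 + (521769/50)*B^6*x*Y^4 + (655881/25)*B^6*x^2*Y^3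 + (678561/25)*B^6*x^3*Y^2 + (567129/50)*B^6*x^4*Y + (60261/50)*B^6*x^5 + (324/5)*B^7*Y^5 + (2856/5)*B^7*x*Y^4 + (7068/5)*B^7*x^2*Y^3 + (7188/5)*B^7*x^3*Y^2 + (2976/5)*B^7*x^4*Y + (324/5)*B^7*x^5 + (3/2)*B^8*Y^5 + (27/2)*B^8*x*Y^4 + 33*B^8*x^2*Y^3 + 33*B^8*x^3*Y^2 + (27/2)*B^8*x^4*Y + (3/2)*B^8*x^5)"
    unfolding k assms(1) by (rule key_id)
  also have "... > 0" unfolding Let_def
    by (rule key_pos) (use assms in auto)
  finally have h: "0 < 32*a^5*?E" .
  have "a > 0" using assms(3) by simp
  then show ?thesis using h by (simp add: zero_less_mult_iff)
qed

lemma divstep: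
  fixes k J Q :: real
  assumes "k > 0" "0 < (k+8)*J - k*Q"
  shows "(1 + 8/k)*J - Q > 0"
proof -
  have "(1 + 8/k)*J - Q = ((k+8)*J - k*Q)/k" using assms(1) by (simp add: field_simps)
  then show ?thesis using assms by simp
qed

theorem lemma8p3:
  fixes n :: nat and k :: real
  assumes "n \<ge> 30"
    and "(real n - 10) / 2 - sqrt (real n) < k"
    and "k < (real n - 10) / 2 + sqrt (real n)"
  shows "let N = real n; p = 1 + 8 / k; q = (N - 8) / 2;
    J2 = (k+4)*(k+6-N)*(k+6)*(k+8-N) + k*(k+2-N)*(k+6)*(k+8-N)
       + (k+2)*(k+4-N)*(k+6)*(k+8-N) + k*(k+2-N)*(k+4)*(k+6-N)
       + (k+2)*(k+4-N)*(k+4)*(k+6-N) + k*(k+2-N)*(k+2)*(k+4-N);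
    q2 = ((q+2)*(q+4-N) + q*(q+2-N))^2 + 2*q*(q+2-N)*(q+2)*(q+4-N)
   in p * J2 - q2 > 0"
proof -
  define a where "a = sqrt (real n)"
  have N30: "real n \<ge> 30" using assms(1) by simp
  have a2: "a^2 = real n" unfolding a_def by simp
  have a0: "a \<ge> 0" unfolding a_def by simp
  have "(27/5::real)^2 < real n" using N30 by (simp add: power2_eq_square)
  then have a5: "27/5 < a" unfolding a_def by (rule real_less_rsqrt)
  define x where "x = k - (real n - 10)/2 + a"
  have x0: "x > 0" using assms(2) unfolding x_def a_def by simp
  have y0: "2*a - x > 0" using assms(3) unfolding x_def a_def by simp
  have "(27/5)*(17/5) < a*(a-2)" using a5 by (intro mult_strict_mono) auto
  then have "0 < (real n - 10)/2 - a" using a2 by (simp add: power2_eq_square algebra_simps)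
  then have kpos: "k > 0" using assms(2) unfolding a_def by linarith
  have kx: "k = x - a + (real n - 10)/2" unfolding x_def by simp
  show ?thesis unfolding Let_def
    by (rule divstep[OF kpos], rule key[OF a2[symmetric] kx]) (use a5 x0 y0 in auto)
qed

end
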